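(* Let $x,y\in\mathrm{Cay}$. Then $[x]\ge[y]$ if and only if $\gamma(x)\ge\gamma(y)$ (containment of permutations). Equivalently, the bijection $[x]\mapsto\gamma(x)$ from the set $[\mathrm{Cay}]$ of equivalence classes to $\mathcal{S}$ maps the set of classes avoiding $[y]$ (i.e. classes $[x]$ with $[x]\not\ge[y]$) onto $\mathcal{S}(\gamma(y))$, the set of permutations avoiding $\gamma(y)$.
   Context: A Cayley permutation of length $n$ is a word of positive integers in which every integer from $1$ to its maximum occurs; $\mathrm{Cay}$ is the set of all of them, $\mathcal{S}\subseteq\mathrm{Cay}$ the set of permutations. For Cayley permutations, $y\le x$ (containment) means there are indices $i_1<\dots<i_k$ ($k$ the length of $y$) with $x(i_s)<x(i_t)\iff y(s)<y(t)$ and $x(i_s)=x(i_t)\iff y(s)=y(t)$. For $x\in\mathrm{Cay}_n$, $\gamma(x)\in\mathcal{S}_n$ is obtained by sorting the pairs $(x(i),i)$ increasingly by first coordinate, ties by decreasing second coordinate, and reading off the second coordinates. Write $x\sim y$ iff $\gamma(x)=\gamma(y)$; $[y]$ is the class of $y$ and $[\mathrm{Cay}]$ the set of classes. For classes, $[x]\ge[y]$ means $x'\ge y'$ for some $x'\in[x]$, $y'\in[y]$. $\mathcal{S}(\tau)$ is the set of permutations avoiding $\tau$. *)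

theory Defs
  imports Main "HOL-Library.Product_Lexorder"
begin

text \<open>Words are lists of naturals; positions are 0-based list indices, values are 1-based.\<close>

definition is_cay :: "nat list \<Rightarrow> bool" where
  "is_cay x \<longleftrightarrow> (\<exists>m. set x = {1..m})"

definition is_perm :: "nat list \<Rightarrow> bool" where
  "is_perm x \<longleftrightarrow> is_cay x \<and> distinct x"

definition contains :: "nat list \<Rightarrow> nat list \<Rightarrow> bool" where
  "contains x y \<longleftrightarrow> (\<exists>is. length is = length y \<and> sorted_wrt (<) is \<and>
      (\<forall>j\<in>set is. j < length x) \<and>
      (\<forall>s<length y. \<forall>t<length y.
         (x ! (is ! s) < x ! (is ! t) \<longleftrightarrow> y ! s < y ! t) \<and>
         (x ! (is ! s) = x ! (is ! t) \<longleftrightarrow> y ! s = y ! t)))"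

text \<open>gamma: sort pairs (x(i), i) increasingly by value, ties by decreasing position,
  and read off positions (converted to 1-based).\<close>
definition gamma :: "nat list \<Rightarrow> nat list" where
  "gamma x = map (\<lambda>(v, i). i + 1)
     (sort_key (\<lambda>(v, i). (v, length x - i)) (zip x [0..<length x]))"

definition cay_equiv :: "nat list \<Rightarrow> nat list \<Rightarrow> bool" where
  "cay_equiv x y \<longleftrightarrow> gamma x = gamma y"

definition class_ge :: "nat list \<Rightarrow> nat list \<Rightarrow> bool" where
  "class_ge x y \<longleftrightarrow> (\<exists>x' y'. is_cay x' \<and> is_cay y' \<and> cay_equiv x' x \<and> cay_equiv y' y
      \<and> contains x' y')"

end

theory Submission
  imports Defs
begin

definition key :: "nat list \<Rightarrow> nat \<Rightarrow> nat \<times> nat" where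
  "key w i = (w ! i, length w - i)"

definition gl :: "nat list \<Rightarrow> (nat \<times> nat) list" where
  "gl w = sort_key (\<lambda>(v, i). (v, length w - i)) (zip w [0..<length w])"

definition pos :: "nat list \<Rightarrow> nat \<Rightarrow> nat" where
  "pos w r = snd (gl w ! r)"

lemma gl_len: "length (gl w) = length w"
  by (simp add: gl_def)

lemma gl_nth:
  assumes "r < length w"
  shows "gl w ! r = (w ! pos w r, pos w r) \<and> pos w r < length w"
proof -
  have "gl w ! r \<in> set (gl w)" using assms gl_len by (metis nth_mem)
  hence "gl w ! r \<in> set (zip w [0..<length w])" by (simp add: gl_def)
  then obtain i where "i < length w" "gl w ! r = (w ! i, i)"
    by (auto simp: set_zip)
  thus ?thesis by (simp add: pos_def)
qed

lemma gamma_eq: "gamma w = map (\<lambda>r. pos w r + 1) [0..<length w]"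
  unfolding gamma_def
  by (rule nth_equalityI) (auto simp: gl_def[symmetric] gl_len pos_def split: prod.splits)

lemma gl_sorted: "sorted_wrt (<) (map (\<lambda>(v, i). (v, length w - i)) (gl w))"
proof -
  have d: "distinct (gl w)" by (simp add: gl_def distinct_zipI2)
  have inj: "inj_on (\<lambda>(v, i). (v, length w - i)) (set (gl w))"
    by (auto simp: inj_on_def gl_def set_zip)
  show ?thesis unfolding strict_sorted_iff
    using d inj by (simp add: distinct_map gl_def)
qed

lemma pos_mono:
  assumes "r < length w" "r' < length w"
  shows "r < r' \<longleftrightarrow> key w (pos w r) < key w (pos w r')"
proof -
  define M where "M = map (\<lambda>(v, i). (v, length w - i)) (gl w)"
  have k: "\<And>r. r < length w \<Longrightarrow> M ! r = key w (pos w r)"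
    using gl_nth gl_len by (simp add: key_def M_def)
  have "\<forall>i j. i < j \<longrightarrow> j < length M \<longrightarrow> M ! i < M ! j"
    using gl_sorted[of w] unfolding M_def[symmetric] sorted_wrt_iff_nth_less by blast
  hence s: "\<And>a b. a < b \<Longrightarrow> b < length w \<Longrightarrow> key w (pos w a) < key w (pos w b)"
    using k by (simp add: M_def gl_len)
  show ?thesis
  proof
    assume "r < r'" thus "key w (pos w r) < key w (pos w r')" using s assms by blast
  next
    assume a: "key w (pos w r) < key w (pos w r')"
    show "r < r'"
    proof (rule ccontr)
      assume "\<not> r < r'"
      hence "r' < r \<or> r' = r" by auto
      thus False
      proof
        assume "r' < r" hence "key w (pos w r') < key w (pos w r)" using s assms by blast
        thus False using a by simp
      next
        assume "r' = r" thus False using a by simp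
      qed
    qed
  qed
qed

lemma pos_bij: "bij_betw (pos w) {0..<length w} {0..<length w}"
proof -
  have inj: "inj_on (pos w) {0..<length w}"
  proof (rule inj_onI)
    fix a b assume ab: "a \<in> {0..<length w}" "b \<in> {0..<length w}" "pos w a = pos w b"
    show "a = b"
    proof (rule ccontr)
      assume "a \<noteq> b"
      hence "a < b \<or> b < a" by auto
      thus False using pos_mono[of a w b] pos_mono[of b w a] ab by auto
    qed
  qed
  have sub: "pos w ` {0..<length w} \<subseteq> {0..<length w}" using gl_nth by auto
  show ?thesis unfolding bij_betw_def using inj sub endo_inj_surj[OF _ sub inj] by simp
qed

definition rk :: "nat list \<Rightarrow> nat \<Rightarrow> nat" where
  "rk w = inv_into {0..<length w} (pos w)"

lemma rk_props:
  assumes "i < length w"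
  shows "rk w i < length w \<and> pos w (rk w i) = i"
  using pos_bij[of w] assms unfolding rk_def
  by (metis atLeastLessThan_iff bij_betw_def bij_betw_inv_into_right inv_into_into zero_le)

lemma key_distinct:
  assumes "distinct w" "i < length w" "j < length w"
  shows "key w i < key w j \<longleftrightarrow> w ! i < w ! j"
proof -
  have "w ! i = w ! j \<Longrightarrow> i = j" using assms nth_eq_iff_index_eq by blast
  thus ?thesis using assms by (auto simp: key_def le_less)
qed

definition emb :: "nat list \<Rightarrow> nat list \<Rightarrow> (nat \<Rightarrow> nat) \<Rightarrow> bool" where
  "emb x y f \<longleftrightarrow> (\<forall>s<length y. f s < length x) \<and>
     (\<forall>s<length y. \<forall>t<length y. s < t \<longleftrightarrow> f s < f t) \<and>
     (\<forall>s<length y. \<forall>t<length y. key y s < key y t \<longleftrightarrow> key x (f s) < key x (f t))"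

lemma contains_emb:
  assumes "contains x y"
  shows "\<exists>f. emb x y f"
proof -
  obtain "is" where l: "length is = length y" and so: "sorted_wrt (<) is"
    and b: "\<forall>j\<in>set is. j < length x"
    and c: "\<forall>s<length y. \<forall>t<length y.
         (x ! (is ! s) < x ! (is ! t) \<longleftrightarrow> y ! s < y ! t) \<and>
         (x ! (is ! s) = x ! (is ! t) \<longleftrightarrow> y ! s = y ! t)"
    using assms unfolding contains_def by blast
  have b': "\<And>s. s < length y \<Longrightarrow> is ! s < length x" using b l nth_mem by metis
  have m1: "\<And>s t. s < length y \<Longrightarrow> t < length y \<Longrightarrow> s < t \<Longrightarrow> is ! s < is ! t"
    using so l unfolding sorted_wrt_iff_nth_less by auto
  have m: "\<And>s t. s < length y \<Longrightarrow> t < length y \<Longrightarrow> s < t \<longleftrightarrow> is ! s < is ! t"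
    using m1 by (metis less_asym linorder_neqE_nat order_less_irrefl)
  have "emb x y (\<lambda>s. is ! s)"
    unfolding emb_def
  proof (intro conjI allI impI)
    fix s assume "s < length y" thus "is ! s < length x" by (rule b')
  next
    fix s t assume "s < length y" "t < length y" thus "s < t \<longleftrightarrow> is ! s < is ! t" by (rule m)
  next
    fix s t assume st: "s < length y" "t < length y"
    have e1: "length y - s < length y - t \<longleftrightarrow> t < s" using st by auto
    have e2: "length x - is ! s < length x - is ! t \<longleftrightarrow> is ! t < is ! s" using st b'[of s] b'[of t] by auto
    have c1: "x ! (is ! s) < x ! (is ! t) \<longleftrightarrow> y ! s < y ! t" using c st by blast
    have c2: "x ! (is ! s) = x ! (is ! t) \<longleftrightarrow> y ! s = y ! t" using c st by blast
    show "key y s < key y t \<longleftrightarrow> key x (is ! s) < key x (is ! t)"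
      unfolding key_def less_prod_simp using e1 e2 c1 c2 m[OF st(2) st(1)]
      by (auto simp: le_less)
  qed
  thus ?thesis by blast
qed

lemma emb_contains:
  assumes "distinct x" "distinct y" "emb x y f"
  shows "contains x y"
proof -
  have A: "\<forall>s<length y. f s < length x" and B: "\<forall>s<length y. \<forall>t<length y. s < t \<longleftrightarrow> f s < f t"
    and C: "\<forall>s<length y. \<forall>t<length y. key y s < key y t \<longleftrightarrow> key x (f s) < key x (f t)"
    using assms(3) unfolding emb_def by blast+
  show ?thesis unfolding contains_def
  proof (intro exI[of _ "map f [0..<length y]"] conjI ballI allI impI)
    show "length (map f [0..<length y]) = length y" by simp
    have "\<And>i j. i < j \<Longrightarrow> j < length y \<Longrightarrow> f i < f j" using B by (meson order.strict_trans)
    then show "sorted_wrt (<) (map f [0..<length y])"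
      unfolding sorted_wrt_iff_nth_less by simp
  next
    fix j assume "j \<in> set (map f [0..<length y])" thus "j < length x" using A by auto
  next
    fix s t assume st: "s < length y" "t < length y"
    have "x ! f s < x ! f t \<longleftrightarrow> y ! s < y ! t"
      using C st key_distinct[OF assms(1)] key_distinct[OF assms(2)] A by metis
    thus "x ! (map f [0..<length y] ! s) < x ! (map f [0..<length y] ! t) \<longleftrightarrow> y ! s < y ! t"
      using st by simp
    have "x ! f s = x ! f t \<longleftrightarrow> f s = f t" using assms(1) A st nth_eq_iff_index_eq by blast
    also have "\<dots> \<longleftrightarrow> s = t" using B st by (metis linorder_neqE_nat order_less_irrefl)
    also have "\<dots> \<longleftrightarrow> y ! s = y ! t" using assms(2) st nth_eq_iff_index_eq by blast
    finally show "x ! (map f [0..<length y] ! s) = x ! (map f [0..<length y] ! t) \<longleftrightarrow> y ! s = y ! t"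
      using st by simp
  qed
qed

lemma gamma_len: "length (gamma w) = length w"
  by (simp add: gamma_eq)

lemma gamma_nth: "r < length w \<Longrightarrow> gamma w ! r = pos w r + 1"
  by (simp add: gamma_eq)

lemma gamma_distinct: "distinct (gamma w)"
proof -
  have "inj_on (pos w) {0..<length w}" using bij_betw_imp_inj_on[OF pos_bij] .
  hence "inj_on (\<lambda>r. pos w r + 1) {0..<length w}" by (simp add: inj_on_def)
  thus ?thesis by (simp add: gamma_eq distinct_map)
qed

lemma gamma_set: "set (gamma w) = {1..length w}"
proof -
  have "pos w ` {0..<length w} = {0..<length w}" using bij_betw_imp_surj_on[OF pos_bij] .
  hence "(\<lambda>r. r + 1) ` pos w ` {0..<length w} = (\<lambda>r. r + 1) ` {0..<length w}" by simp
  also have "\<dots> = {1..length w}"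
  proof -
    have "\<And>k. k \<in> {1..length w} \<Longrightarrow> k \<in> (\<lambda>r. r + 1) ` {0..<length w}"
    proof -
      fix k assume "k \<in> {1..length w}"
      hence "k = (k - 1) + 1" "k - 1 \<in> {0..<length w}" by auto
      thus "k \<in> (\<lambda>r. r + 1) ` {0..<length w}" by (rule image_eqI)
    qed
    thus ?thesis by auto
  qed
  finally show ?thesis by (simp add: gamma_eq image_image)
qed

lemma gamma_perm: "is_perm (gamma w)"
  unfolding is_perm_def is_cay_def using gamma_set[of w] gamma_distinct[of w] by (intro conjI exI)

lemma gamma_key:
  assumes "r < length w" "r' < length w"
  shows "key (gamma w) r < key (gamma w) r' \<longleftrightarrow> pos w r < pos w r'"
  using key_distinct[OF gamma_distinct, of r w r'] assms gamma_nth gamma_len by simp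

lemma emb_gamma:
  assumes "emb x y f"
  shows "emb (gamma x) (gamma y) (\<lambda>r. rk x (f (pos y r)))"
proof -
  have A: "\<forall>s<length y. f s < length x" and B: "\<forall>s<length y. \<forall>t<length y. s < t \<longleftrightarrow> f s < f t"
    and C: "\<forall>s<length y. \<forall>t<length y. key y s < key y t \<longleftrightarrow> key x (f s) < key x (f t)"
    using assms unfolding emb_def by blast+
  have py: "\<And>r. r < length y \<Longrightarrow> pos y r < length y" using gl_nth by blast
  show ?thesis unfolding emb_def gamma_len
  proof (intro conjI allI impI)
    fix s assume "s < length y" thus "rk x (f (pos y s)) < length x" using A py rk_props by blast
  next
    fix s t assume st: "s < length y" "t < length y"
    let ?g = "\<lambda>r. rk x (f (pos y r))"
    have g1: "?g s < length x" "?g t < length x" using A py rk_props st by blast+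
    have g2: "pos x (?g s) = f (pos y s)" "pos x (?g t) = f (pos y t)" using A py rk_props st by blast+
    have "s < t \<longleftrightarrow> key y (pos y s) < key y (pos y t)" using pos_mono st by blast
    also have "\<dots> \<longleftrightarrow> key x (f (pos y s)) < key x (f (pos y t))" using C py st by blast
    also have "\<dots> \<longleftrightarrow> ?g s < ?g t" using pos_mono[OF g1] g2 by simp
    finally show "s < t \<longleftrightarrow> ?g s < ?g t" .
    have "key (gamma y) s < key (gamma y) t \<longleftrightarrow> pos y s < pos y t" using gamma_key st by blast
    also have "\<dots> \<longleftrightarrow> f (pos y s) < f (pos y t)" using B py st by blast
    also have "\<dots> \<longleftrightarrow> key (gamma x) (?g s) < key (gamma x) (?g t)" using gamma_key[OF g1] g2 by simp
    finally show "key (gamma y) s < key (gamma y) t \<longleftrightarrow> key (gamma x) (?g s) < key (gamma x) (?g t)" .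
  qed
qed

lemma perm_len:
  assumes "is_perm p" shows "set p = {1..length p}"
proof -
  obtain m where m: "set p = {1..m}" and d: "distinct p" using assms unfolding is_perm_def is_cay_def by blast
  have "card (set p) = length p" using distinct_card[OF d] .
  hence "m = length p" using m by simp
  thus ?thesis using m by simp
qed

lemma perm_pos:
  assumes "is_perm p" "r < length p"
  shows "p ! pos p r = r + 1"
proof -
  let ?n = "length p"
  have dp: "distinct p" using assms is_perm_def by blast
  define L where "L = map (\<lambda>r. p ! pos p r) [0..<?n]"
  have pr: "\<And>r. r < ?n \<Longrightarrow> pos p r < ?n" using gl_nth by blast
  have "\<And>i j. i < j \<Longrightarrow> j < ?n \<Longrightarrow> p ! pos p i < p ! pos p j"
  proof -
    fix i j assume ij: "i < j" "j < ?n"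
    hence "key p (pos p i) < key p (pos p j)" using pos_mono[of i p j] by simp
    thus "p ! pos p i < p ! pos p j" using key_distinct[OF dp] pr ij by simp
  qed
  hence "sorted_wrt (<) L"
    unfolding L_def sorted_wrt_iff_nth_less by simp
  hence sL: "sorted L" "distinct L" using strict_sorted_iff by blast+
  have "set L = (\<lambda>i. p ! i) ` pos p ` {0..<?n}" by (simp add: L_def image_image)
  also have "\<dots> = (\<lambda>i. p ! i) ` {0..<?n}" using bij_betw_imp_surj_on[OF pos_bij] by simp
  also have "\<dots> = set p" by (auto simp: set_conv_nth image_def)
  also have "\<dots> = {1..?n}" using perm_len[OF assms(1)] .
  also have "\<dots> = set [1..<?n+1]" by (simp only: set_upt) auto
  finally have "set L = set [1..<?n+1]" .
  hence "L = [1..<?n+1]" by (rule sorted_distinct_set_unique[OF sL(1) sL(2) sorted_upt distinct_upt])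
  hence "L ! r = r + 1" using assms(2) by (simp del: upt_Suc add: nth_upt)
  thus ?thesis using assms(2) by (simp add: L_def)
qed

lemma gamma_gamma:
  assumes "is_perm p"
  shows "gamma (gamma p) = p"
proof (rule nth_equalityI)
  show "length (gamma (gamma p)) = length p" by (simp add: gamma_len)
next
  fix r assume r: "r < length (gamma (gamma p))"
  hence r': "r < length p" by (simp add: gamma_len)
  let ?q = "gamma p"
  have qp: "is_perm ?q" by (rule gamma_perm)
  have lq: "length ?q = length p" by (rule gamma_len)
  have a: "?q ! pos ?q r = r + 1" using perm_pos[OF qp] r' lq by simp
  have b: "pos ?q r < length p" using gl_nth r' lq by metis
  have "?q ! pos ?q r = pos p (pos ?q r) + 1" using gamma_nth b by blast
  hence c: "pos p (pos ?q r) = r" using a by simp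
  have "p ! pos p (pos ?q r) = pos ?q r + 1" using perm_pos[OF assms b] .
  hence "p ! r = pos ?q r + 1" using c by simp
  thus "gamma ?q ! r = p ! r" using gamma_nth r' lq by simp
qed

lemma part1: "class_ge x y \<longleftrightarrow> contains (gamma x) (gamma y)"
proof
  assume "class_ge x y"
  then obtain x' y' where "gamma x' = gamma x" "gamma y' = gamma y" "contains x' y'"
    unfolding class_ge_def cay_equiv_def by blast
  then obtain f where "emb x' y' f" using contains_emb by blast
  hence "emb (gamma x') (gamma y') (\<lambda>r. rk x' (f (pos y' r)))" by (rule emb_gamma)
  hence "contains (gamma x') (gamma y')" using emb_contains gamma_distinct by blast
  thus "contains (gamma x) (gamma y)" using \<open>gamma x' = gamma x\<close> \<open>gamma y' = gamma y\<close> by simp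
next
  assume "contains (gamma x) (gamma y)"
  then obtain f where "emb (gamma x) (gamma y) f" using contains_emb by blast
  hence "emb (gamma (gamma x)) (gamma (gamma y)) (\<lambda>r. rk (gamma x) (f (pos (gamma y) r)))" by (rule emb_gamma)
  hence "contains (gamma (gamma x)) (gamma (gamma y))" using emb_contains gamma_distinct by blast
  moreover have "gamma (gamma (gamma x)) = gamma x" "gamma (gamma (gamma y)) = gamma y"
    using gamma_gamma gamma_perm by blast+
  moreover have "is_cay (gamma (gamma x))" "is_cay (gamma (gamma y))"
    using gamma_perm is_perm_def by blast+
  ultimately show "class_ge x y" unfolding class_ge_def cay_equiv_def by blast
qed

theorem theorem4p9:
  assumes "is_cay x" and "is_cay y"
  shows "(class_ge x y \<longleftrightarrow> contains (gamma x) (gamma y)) \<and>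
         gamma ` {x'. is_cay x' \<and> \<not> class_ge x' y} = {p. is_perm p \<and> \<not> contains p (gamma y)}"
proof (intro conjI)
  show "class_ge x y \<longleftrightarrow> contains (gamma x) (gamma y)" by (rule part1)
  show "gamma ` {x'. is_cay x' \<and> \<not> class_ge x' y} = {p. is_perm p \<and> \<not> contains p (gamma y)}"
  proof
    show "gamma ` {x'. is_cay x' \<and> \<not> class_ge x' y} \<subseteq> {p. is_perm p \<and> \<not> contains p (gamma y)}"
      using part1 gamma_perm by blast
  next
    show "{p. is_perm p \<and> \<not> contains p (gamma y)} \<subseteq> gamma ` {x'. is_cay x' \<and> \<not> class_ge x' y}"
    proof
      fix p assume p: "p \<in> {p. is_perm p \<and> \<not> contains p (gamma y)}"
      hence "gamma (gamma p) = p" using gamma_gamma by blast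
      moreover have "is_cay (gamma p)" using gamma_perm is_perm_def by blast
      moreover have "\<not> class_ge (gamma p) y" using part1 p \<open>gamma (gamma p) = p\<close> by simp
      ultimately show "p \<in> gamma ` {x'. is_cay x' \<and> \<not> class_ge x' y}" by (metis (mono_tags) image_eqI mem_Collect_eq)
    qed
  qed
qed

end
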